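(* Let $M, N \geq 1$ be integers and let $\phi_1(x), \ldots, \phi_{MN}(x)$ be sufficiently differentiable $N$-vector valued functions of $x$. Let $\Phi$ be the $MN \times MN$ block Wronskian matrix $$\Phi=\begin{pmatrix} \phi_1&\phi_2&\cdots&\phi_{MN}\\ \phi_1'&\phi_2'&\cdots&\phi_{MN}'\\ \vdots&\vdots&\ddots&\vdots\\ \phi_1^{(M-1)}&\phi_2^{(M-1)}&\cdots&\phi_{MN}^{(M-1)} \end{pmatrix},$$ whose first $N$ rows are the columns $\phi_i$ and every other entry is the derivative of the entry $N$ rows above it. Suppose $\det \Phi \neq 0$, so that $\Phi^{-1}$ is defined. Let $C_0, \ldots, C_{M-1}$ be the $N\times N$ matrix functions defined by the block decomposition $$(C_0\ C_1\ \cdots\ C_{M-1}) = \left(\phi_1^{(M)}\ \cdots\ \phi_{MN}^{(M)}\right)\Phi^{-1},$$ and define the matrix differential operator $$K = I\,\partial^M - \sum_{j=0}^{M-1} C_j(x)\,\partial^j,$$ which is written in matrix notation as $K=I\,\partial^M-\left(\phi_1^{(M)}\ \cdots\ \phi_{MN}^{(M)}\right)\Phi^{-1}\begin{pmatrix} I\\ \partial I\\ \vdots\\ \partial^{M-1}I\end{pmatrix}$. Then: (a) $K$ is the unique monic MODO of order $M$ such that $K(\phi_i) = 0$ for all $1 \leq i \leq MN$. (b) If $L$ is any MODO such that $L(\phi_i) = 0$ for all $1 \leq i \leq MN$, then there exists a MODO $Q$ such that $L = Q \circ K$.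
   Context: All functions are assumed to be sufficiently differentiable functions of $x$. A matrix coefficient ordinary differential operator (MODO) is a polynomial $L=\sum_{i=0}^n \alpha_i(x)\partial^i$ in $\partial$ whose coefficients $\alpha_i(x)$ are $N\times N$ matrix-valued functions of $x$. Such an operator acts on an $N$-vector valued function $f$ by $L(f)=\sum_{i=0}^n \alpha_i(x) f^{(i)}(x)$, with matrix-vector products. MODOs are added coefficientwise. They are multiplied by extending linearly the rule $$\left(\alpha(x)\partial^m\right)\circ\left(\beta(x)\partial^n\right)=\sum_{i=0}^m \binom{m}{i}\alpha(x)\beta^{(i)}(x)\partial^{m+n-i},$$ in which the products of coefficients are matrix products. With this rule, $(L\circ Q)(f) = L(Q(f))$. The order of a MODO is the highest power of $\partial$ that appears with a nonzero coefficient. A MODO of order $M$ is monic if its coefficient of $\partial^M$ is the $N\times N$ identity matrix $I$. The symbol $0$ in $L(\phi_i)=0$ denotes the zero vector. *)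

theory Defs
  imports "HOL-Analysis.Analysis" "Jordan_Normal_Form.Determinant"
begin

definition smooth :: "(real \<Rightarrow> real) \<Rightarrow> bool" where
  "smooth f \<longleftrightarrow> (\<forall>k x. (deriv ^^ k) f differentiable (at x))"

definition inv_mat :: "real mat \<Rightarrow> real mat" where
  "inv_mat A = (THE B. B \<in> carrier_mat (dim_row A) (dim_row A) \<and>
                  A * B = 1\<^sub>m (dim_row A) \<and> B * A = 1\<^sub>m (dim_row A))"

text \<open>A MODO with N x N coefficients: L k x is the coefficient of the k-th power
  of the derivative at the point x. Coefficients are smooth, finitely many nonzero.\<close>
type_synonym modo = "nat \<Rightarrow> real \<Rightarrow> real mat"

definition is_modo :: "nat \<Rightarrow> modo \<Rightarrow> bool" where
  "is_modo N L \<longleftrightarrow> (\<forall>k x. L k x \<in> carrier_mat N N)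
     \<and> (\<forall>k i j. i < N \<longrightarrow> j < N \<longrightarrow> smooth (\<lambda>x. L k x $$ (i, j)))
     \<and> (\<exists>d. \<forall>k>d. \<forall>x. L k x = 0\<^sub>m N N)"

definition modo_bound :: "nat \<Rightarrow> modo \<Rightarrow> nat" where
  "modo_bound N L = (LEAST d. \<forall>k>d. \<forall>x. L k x = 0\<^sub>m N N)"

text \<open>Action of a MODO on an N-vector valued function f, given by its component
  functions f s (s < N); the result is again given componentwise.\<close>
definition modo_apply :: "nat \<Rightarrow> modo \<Rightarrow> (nat \<Rightarrow> real \<Rightarrow> real) \<Rightarrow> nat \<Rightarrow> real \<Rightarrow> real" where
  "modo_apply N L f r x =
     (\<Sum>k\<le>modo_bound N L. \<Sum>s<N. L k x $$ (r, s) * (deriv ^^ k) (f s) x)"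

definition annihilates :: "nat \<Rightarrow> modo \<Rightarrow> (nat \<Rightarrow> real \<Rightarrow> real) \<Rightarrow> bool" where
  "annihilates N L f \<longleftrightarrow> (\<forall>r<N. \<forall>x. modo_apply N L f r x = 0)"

text \<open>Composition of MODOs, via the Leibniz rule
  (a D^m) o (b D^n) = sum_i (m choose i) a b^(i) D^(m+n-i).\<close>
definition modo_comp :: "nat \<Rightarrow> modo \<Rightarrow> modo \<Rightarrow> modo" where
  "modo_comp N A B k x = mat N N (\<lambda>(r, s).
     \<Sum>m\<le>modo_bound N A. \<Sum>n\<le>modo_bound N B. \<Sum>i\<le>m.
        (if m + n - i = k then
           of_nat (m choose i) *
             (\<Sum>t<N. A m x $$ (r, t) * (deriv ^^ i) (\<lambda>y. B n y $$ (t, s)) x)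
         else 0))"

definition monic_modo :: "nat \<Rightarrow> nat \<Rightarrow> modo \<Rightarrow> bool" where
  "monic_modo N M L \<longleftrightarrow> is_modo N L \<and> (\<forall>x. L M x = 1\<^sub>m N)
     \<and> (\<forall>k>M. \<forall>x. L k x = 0\<^sub>m N N)"

text \<open>Block Wronskian: phi i r is the r-th component (r < N) of phi_(i+1) (i < M*N).
  Row a = j*N + r holds the j-th derivative of the r-th components.\<close>
definition wronskian :: "nat \<Rightarrow> nat \<Rightarrow> (nat \<Rightarrow> nat \<Rightarrow> real \<Rightarrow> real) \<Rightarrow> real \<Rightarrow> real mat" where
  "wronskian M N phi x = mat (M * N) (M * N)
     (\<lambda>(a, i). (deriv ^^ (a div N)) (phi i (a mod N)) x)"

definition top_deriv_row :: "nat \<Rightarrow> nat \<Rightarrow> (nat \<Rightarrow> nat \<Rightarrow> real \<Rightarrow> real) \<Rightarrow> real \<Rightarrow> real mat" where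
  "top_deriv_row M N phi x = mat N (M * N) (\<lambda>(r, i). (deriv ^^ M) (phi i r) x)"

definition coeffC :: "nat \<Rightarrow> nat \<Rightarrow> (nat \<Rightarrow> nat \<Rightarrow> real \<Rightarrow> real) \<Rightarrow> nat \<Rightarrow> real \<Rightarrow> real mat" where
  "coeffC M N phi j x =
     (let C = top_deriv_row M N phi x * inv_mat (wronskian M N phi x)
      in mat N N (\<lambda>(r, s). C $$ (r, j * N + s)))"

definition Kop :: "nat \<Rightarrow> nat \<Rightarrow> (nat \<Rightarrow> nat \<Rightarrow> real \<Rightarrow> real) \<Rightarrow> modo" where
  "Kop M N phi k x =
     (if k = M then 1\<^sub>m N else if k < M then - coeffC M N phi k x else 0\<^sub>m N N)"

end

theory Submission
  imports Defs
begin



definition Dk :: "nat \<Rightarrow> (real \<Rightarrow> real) \<Rightarrow> bool" where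
  "Dk k h \<longleftrightarrow> (\<forall>j\<le>k. \<forall>x. (deriv ^^ j) h differentiable (at x))"

lemma smooth_Dk: "smooth h \<longleftrightarrow> (\<forall>k. Dk k h)"
  unfolding smooth_def Dk_def by blast

lemma Dk_Suc: "Dk (Suc k) h \<longleftrightarrow> (\<forall>x. h differentiable (at x)) \<and> Dk k (deriv h)"
proof -
  have "(\<forall>j\<le>Suc k. P j) \<longleftrightarrow> P 0 \<and> (\<forall>j\<le>k. P (Suc j))" for P
    by (metis Suc_le_mono le0 not0_implies_Suc)
  thus ?thesis unfolding Dk_def by (simp add: funpow_Suc_right del: funpow.simps)
qed

lemma Dk_0: "Dk 0 h \<longleftrightarrow> (\<forall>x. h differentiable (at x))"
  unfolding Dk_def by simp

lemma Dk_mono: "Dk k h \<Longrightarrow> j \<le> k \<Longrightarrow> Dk j h"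
  unfolding Dk_def by auto

lemma rderiv_add: fixes f g :: "real \<Rightarrow> real" shows "(\<And>x. f differentiable (at x)) \<Longrightarrow> (\<And>x. g differentiable (at x)) \<Longrightarrow>
   deriv (\<lambda>x. f x + g x) = (\<lambda>x. deriv f x + deriv g x)"
  by (rule ext, rule DERIV_imp_deriv, intro DERIV_add)
     (auto simp: DERIV_deriv_iff_real_differentiable)

lemma rderiv_mult: fixes f g :: "real \<Rightarrow> real" shows "(\<And>x. f differentiable (at x)) \<Longrightarrow> (\<And>x. g differentiable (at x)) \<Longrightarrow>
   deriv (\<lambda>x. f x * g x) = (\<lambda>x. deriv f x * g x + f x * deriv g x)"
  by (rule ext, rule DERIV_imp_deriv, subst add.commute, intro DERIV_mult')
     (auto simp: DERIV_deriv_iff_real_differentiable)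

lemma rderiv_inverse: fixes f g :: "real \<Rightarrow> real" shows "(\<And>x. f differentiable (at x)) \<Longrightarrow> (\<And>x. f x \<noteq> 0) \<Longrightarrow>
   deriv (\<lambda>x. inverse (f x)) = (\<lambda>x. - deriv f x * (inverse (f x) * inverse (f x)))"
  by (rule ext, rule DERIV_imp_deriv, rule derivative_eq_intros)
     (auto simp: DERIV_deriv_iff_real_differentiable)

lemma rdiff_add: fixes f g :: "real \<Rightarrow> real" shows "f differentiable (at x) \<Longrightarrow> g differentiable (at x) \<Longrightarrow> (\<lambda>x. f x + g x) differentiable (at x)"
  by (simp add: differentiable_add)
lemma rdiff_mult: fixes f g :: "real \<Rightarrow> real" shows "f differentiable (at x) \<Longrightarrow> g differentiable (at x) \<Longrightarrow> (\<lambda>x. f x * g x) differentiable (at x)"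
  by (simp add: differentiable_mult)

lemma Dk_const: "Dk k (\<lambda>x. c)"
proof (induction k arbitrary: c)
  case 0 thus ?case by (simp add: Dk_0)
next
  case (Suc k) thus ?case by (simp add: Dk_Suc)
qed

lemma Dk_add: "Dk k f \<Longrightarrow> Dk k g \<Longrightarrow> Dk k (\<lambda>x. f x + g x)"
proof (induction k arbitrary: f g)
  case 0 thus ?case by (simp add: Dk_0 rdiff_add)
next
  case (Suc k)
  thus ?case by (simp add: Dk_Suc rdiff_add rderiv_add)
qed

lemma Dk_mult: "Dk k f \<Longrightarrow> Dk k g \<Longrightarrow> Dk k (\<lambda>x. f x * g x)"
proof (induction k arbitrary: f g)
  case 0 thus ?case by (simp add: Dk_0 rdiff_mult)
next
  case (Suc k)
  have f: "\<forall>x. f differentiable (at x)" "Dk k (deriv f)" "Dk k f"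
    using Suc.prems Dk_Suc Dk_mono[of "Suc k" f k] by auto
  have g: "\<forall>x. g differentiable (at x)" "Dk k (deriv g)" "Dk k g"
    using Suc.prems Dk_Suc Dk_mono[of "Suc k" g k] by auto
  show ?case using f g Suc.IH
    by (simp add: Dk_Suc rdiff_mult rderiv_mult Dk_add)
qed

lemma Dk_inverse: "(\<And>j. Dk j f) \<Longrightarrow> (\<And>x. f x \<noteq> 0) \<Longrightarrow> Dk k (\<lambda>x. inverse (f x))"
proof (induction k)
  case 0
  have "\<forall>x. f differentiable (at x)" using 0(1)[of 0] by (simp add: Dk_0)
  thus ?case using 0(2) by (simp add: Dk_0 differentiable_inverse)
next
  case (Suc k)
  have f: "\<forall>x. f differentiable (at x)" "Dk k (deriv f)"
    using Suc.prems(1)[of "Suc k"] Dk_Suc by auto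
  have "Dk k (\<lambda>x. - deriv f x * (inverse (f x) * inverse (f x)))"
    using Dk_mult[OF Dk_mult[OF Dk_const[of k "-1"] f(2)] Dk_mult[OF Suc.IH Suc.IH]] Suc.prems
    by simp
  thus ?case using f Suc.prems
    by (simp add: Dk_Suc rderiv_inverse differentiable_inverse)
qed

lemma smooth_const[simp]: "smooth (\<lambda>x. c)" by (simp add: smooth_Dk Dk_const)
lemma smooth_add: "smooth f \<Longrightarrow> smooth g \<Longrightarrow> smooth (\<lambda>x. f x + g x)"
  by (simp add: smooth_Dk Dk_add)
lemma smooth_mult: "smooth f \<Longrightarrow> smooth g \<Longrightarrow> smooth (\<lambda>x. f x * g x)"
  by (simp add: smooth_Dk Dk_mult)
lemma smooth_minus: "smooth f \<Longrightarrow> smooth (\<lambda>x. - f x)"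
  using smooth_mult[OF smooth_const[of "-1"], of f] by simp
lemma smooth_diff: "smooth f \<Longrightarrow> smooth g \<Longrightarrow> smooth (\<lambda>x. f x - g x)"
  using smooth_add[OF _ smooth_minus, of f g] by simp
lemma smooth_inverse: "smooth f \<Longrightarrow> (\<And>x. f x \<noteq> 0) \<Longrightarrow> smooth (\<lambda>x. inverse (f x))"
  by (simp add: smooth_Dk Dk_inverse)
lemma smooth_divide: "smooth f \<Longrightarrow> smooth g \<Longrightarrow> (\<And>x. g x \<noteq> 0) \<Longrightarrow> smooth (\<lambda>x. f x / g x)"
  using smooth_mult[OF _ smooth_inverse, of f g] by (simp add: divide_inverse)
lemma smooth_sum: "(\<And>i. i \<in> S \<Longrightarrow> smooth (f i)) \<Longrightarrow> smooth (\<lambda>x. \<Sum>i\<in>S. f i x)"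
proof (induction S rule: infinite_finite_induct)
  case (insert a S) thus ?case by (simp add: smooth_add)
qed auto
lemma smooth_prod: "(\<And>i. i \<in> S \<Longrightarrow> smooth (f i)) \<Longrightarrow> smooth (\<lambda>x. \<Prod>i\<in>S. f i x)"
proof (induction S rule: infinite_finite_induct)
  case (insert a S) thus ?case by (simp add: smooth_mult)
qed auto
lemma smooth_if: "smooth f \<Longrightarrow> smooth g \<Longrightarrow> smooth (\<lambda>x. if P then f x else g x)"
  by (cases P) auto

lemma smooth_deriv: "smooth f \<Longrightarrow> smooth (deriv f)"
  unfolding smooth_def by (metis funpow_Suc_right o_apply)
lemma smooth_funpow: "smooth f \<Longrightarrow> smooth ((deriv ^^ j) f)"
  by (induction j) (auto simp: smooth_deriv)
lemma smooth_diffble: "smooth f \<Longrightarrow> f differentiable (at x)"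
  unfolding smooth_def by (metis funpow_0)

lemma smooth_higher_deriv_sum:
  assumes "finite S" "\<And>i. i \<in> S \<Longrightarrow> smooth (f i)"
  shows "(deriv ^^ k) (\<lambda>x. \<Sum>i\<in>S. f i x) = (\<lambda>x. \<Sum>i\<in>S. (deriv ^^ k) (f i) x)"
  using assms(2)
proof (induction k arbitrary: f)
  case 0 thus ?case by simp
next
  case (Suc k)
  have "deriv (\<lambda>x. \<Sum>i\<in>S. f i x) = (\<lambda>x. \<Sum>i\<in>S. deriv (f i) x)"
    by (rule ext, rule DERIV_imp_deriv, rule DERIV_sum)
       (use Suc.prems in \<open>auto simp: DERIV_deriv_iff_real_differentiable smooth_diffble\<close>)
  hence "(deriv ^^ Suc k) (\<lambda>x. \<Sum>i\<in>S. f i x) = (deriv ^^ k) (\<lambda>x. \<Sum>i\<in>S. deriv (f i) x)"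
    by (simp add: funpow_Suc_right del: funpow.simps)
  also have "\<dots> = (\<lambda>x. \<Sum>i\<in>S. (deriv ^^ k) (deriv (f i)) x)"
    using Suc.IH[of "\<lambda>i. deriv (f i)"] Suc.prems smooth_deriv by blast
  finally show ?case by (simp add: funpow_Suc_right del: funpow.simps)
qed

lemma higher_deriv_zero: "(deriv ^^ k) (\<lambda>x. 0::real) = (\<lambda>x. 0)"
  by (induction k) auto

lemma Suc_choose': "Suc n choose k = (n choose k) + (if k = 0 then 0 else (n choose (k-1)))"
  by (cases k) simp_all

lemma leibniz:
  assumes "smooth f" "smooth g"
  shows "(deriv ^^ n) (\<lambda>w. f w * g w) z =
           (\<Sum>i = 0..n. of_nat (n choose i) * (deriv ^^ i) f z * (deriv ^^ (n-i)) g z)"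
proof (induction n arbitrary: z)
  case 0 then show ?case by simp
next
  case (Suc n z)
  have *: "\<And>n z. ((deriv ^^ n) f has_field_derivative deriv ((deriv ^^ n) f) z) (at z)"
          "\<And>n z. ((deriv ^^ n) g has_field_derivative deriv ((deriv ^^ n) g) z) (at z)"
    using assms smooth_funpow smooth_diffble DERIV_deriv_iff_real_differentiable by blast+
  have sumeq: "(\<Sum>i = 0..n.
               of_nat (n choose i) * (deriv ((deriv ^^ i) f) z * (deriv ^^ (n-i)) g z + deriv ((deriv ^^ (n-i)) g) z * (deriv ^^ i) f z)) =
            g z * deriv ((deriv ^^ n) f) z + (\<Sum>i = 0..n. (deriv ^^ i) f z * (of_nat (Suc n choose i) * (deriv ^^ (Suc n - i)) g z))"
    apply (simp add: Suc_choose' algebra_simps sum.distrib)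
    apply (subst (4) sum_Suc_reindex)
    apply (auto simp: algebra_simps Suc_diff_le intro: sum.cong)
    done
  have eq: "(deriv ^^ n) (\<lambda>w. f w * g w) = (\<lambda>w. \<Sum>i = 0..n. of_nat (n choose i) * (deriv ^^ i) f w * (deriv ^^ (n-i)) g w)"
    using Suc.IH by auto
  have "((\<lambda>w. \<Sum>i = 0..n. of_nat (n choose i) * (deriv ^^ i) f w * (deriv ^^ (n-i)) g w) has_field_derivative
         (\<Sum>i = 0..Suc n. (Suc n choose i) * (deriv ^^ i) f z * (deriv ^^ (Suc n - i)) g z))
        (at z)"
       apply (simp add: algebra_simps)
       apply (rule derivative_eq_intros | simp)+
           apply (auto intro: DERIV_mult *)
    by (metis (no_types, lifting) mult.commute sum.cong sumeq)
  then show ?case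
    unfolding funpow.simps o_apply eq
    by (simp add: DERIV_imp_deriv)
qed




lemma smooth_det:
  assumes "\<And>x. A x \<in> carrier_mat n n"
    and "\<And>i j. i < n \<Longrightarrow> j < n \<Longrightarrow> smooth (\<lambda>x. A x $$ (i, j))"
  shows "smooth (\<lambda>x. det (A x))"
proof -
  have eq: "(\<lambda>x. det (A x)) = (\<lambda>x. \<Sum> p \<in> {p. p permutes {0 ..< n}}.
     signof p * (\<Prod> i = 0 ..< n. A x $$ (i, p i)))"
    using det_def'[OF assms(1)] by auto
  show ?thesis unfolding eq
  proof (rule smooth_sum, rule smooth_mult[OF smooth_const], rule smooth_prod)
    fix p i assume p: "p \<in> {p. p permutes {0 ..< n}}" and i: "i \<in> {0..<n}"
    have "p i < n" using p i by (auto simp: permutes_in_image)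
    thus "smooth (\<lambda>x. A x $$ (i, p i))" using i assms(2) by auto
  qed
qed

lemma smult_smult_mat': "a \<cdot>\<^sub>m (b \<cdot>\<^sub>m A) = (a * b) \<cdot>\<^sub>m (A :: real mat)"
  by (rule eq_matI) auto

lemma one_smult_mat': "(1::real) \<cdot>\<^sub>m A = A"
  by (rule eq_matI) auto

lemma inv_mat_adj:
  assumes A: "A \<in> carrier_mat n n" and d: "det A \<noteq> 0"
  shows "inv_mat A = inverse (det A) \<cdot>\<^sub>m adj_mat A"
    and "inv_mat A \<in> carrier_mat n n" "A * inv_mat A = 1\<^sub>m n" "inv_mat A * A = 1\<^sub>m n"
proof -
  define B where "B = inverse (det A) \<cdot>\<^sub>m adj_mat A"
  have Bc: "B \<in> carrier_mat n n" using adj_mat(1)[OF A] by (simp add: B_def)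
  have AB: "A * B = 1\<^sub>m n" unfolding B_def
    using adj_mat[OF A] A d by (simp add: mult_smult_distrib smult_smult_mat' one_smult_mat')
  have BA: "B * A = 1\<^sub>m n" unfolding B_def
    using adj_mat[OF A] A d by (simp add: mult_smult_assoc_mat smult_smult_mat' one_smult_mat')
  have dr: "dim_row A = n" using A by simp
  have "inv_mat A = B" unfolding inv_mat_def dr
  proof (rule the_equality)
    show "B \<in> carrier_mat n n \<and> A * B = 1\<^sub>m n \<and> B * A = 1\<^sub>m n" using Bc AB BA by auto
  next
    fix C assume C: "C \<in> carrier_mat n n \<and> A * C = 1\<^sub>m n \<and> C * A = 1\<^sub>m n"
    have "C = (B * A) * C" using C BA by (metis left_mult_one_mat)
    also have "\<dots> = B * (A * C)" using A Bc C by (simp add: assoc_mult_mat[of _ n n _ n _ n])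
    also have "\<dots> = B" using C Bc by simp
    finally show "C = B" .
  qed
  thus "inv_mat A = inverse (det A) \<cdot>\<^sub>m adj_mat A" "inv_mat A \<in> carrier_mat n n"
     "A * inv_mat A = 1\<^sub>m n" "inv_mat A * A = 1\<^sub>m n" using Bc AB BA B_def by auto
qed

lemma smooth_inv_mat:
  assumes A: "\<And>x. A x \<in> carrier_mat n n"
    and s: "\<And>i j. i < n \<Longrightarrow> j < n \<Longrightarrow> smooth (\<lambda>x. A x $$ (i, j))"
    and d: "\<And>x. det (A x) \<noteq> 0"
    and ij: "i < n" "j < n"
  shows "smooth (\<lambda>x. inv_mat (A x) $$ (i, j))"
proof -
  have dr: "\<And>x. dim_row (A x) = n" "\<And>x. dim_col (A x) = n" using A by auto
  have eq: "(\<lambda>x. inv_mat (A x) $$ (i, j)) = (\<lambda>x. inverse (det (A x)) *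
      ((-1)^(j+i) * det (mat_delete (A x) j i)))"
    using inv_mat_adj(1)[OF A d] adj_mat(1)[OF A] ij
    by (auto simp: adj_mat_def cofactor_def dr)
  have "smooth (\<lambda>x. inverse (det (A x)) *
      ((-1)^(j+i) * det (mat_delete (A x) j i)))"
  proof -
    have "smooth (\<lambda>x. det (mat_delete (A x) j i))"
    proof (rule smooth_det)
      show "mat_delete (A x) j i \<in> carrier_mat (n-1) (n-1)" for x
        by (simp add: mat_delete_def dr)
      fix a b assume ab: "a < n - 1" "b < n - 1"
      have "(\<lambda>x. mat_delete (A x) j i $$ (a, b)) =
         (\<lambda>x. A x $$ (if a < j then a else Suc a, if b < i then b else Suc b))"
        using ab by (auto simp: mat_delete_def dr)
      moreover have "(if a < j then a else Suc a) < n" "(if b < i then b else Suc b) < n"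
        using ab by auto
      ultimately show "smooth (\<lambda>x. mat_delete (A x) j i $$ (a, b))" using s by simp
    qed
    moreover have "smooth (\<lambda>x. det (A x))" using smooth_det[of A n] A s by blast
    ultimately show ?thesis using d
      by (intro smooth_mult smooth_inverse smooth_const)
  qed
  thus ?thesis using eq by simp
qed




definition applyG :: "nat \<Rightarrow> nat \<Rightarrow> modo \<Rightarrow> (nat \<Rightarrow> real \<Rightarrow> real) \<Rightarrow> nat \<Rightarrow> real \<Rightarrow> real" where
  "applyG N D L f r x = (\<Sum>k\<le>D. \<Sum>s<N. L k x $$ (r, s) * (deriv ^^ k) (f s) x)"

definition compG :: "nat \<Rightarrow> nat \<Rightarrow> nat \<Rightarrow> modo \<Rightarrow> modo \<Rightarrow> modo" where
  "compG N DA DB A B k x = mat N N (\<lambda>(r, s).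
     \<Sum>m\<le>DA. \<Sum>n\<le>DB. \<Sum>i\<le>m.
        (if m + n - i = k then
           of_nat (m choose i) *
             (\<Sum>t<N. A m x $$ (r, t) * (deriv ^^ i) (\<lambda>y. B n y $$ (t, s)) x)
         else 0))"

definition vanish :: "nat \<Rightarrow> nat \<Rightarrow> modo \<Rightarrow> bool" where
  "vanish N D L \<longleftrightarrow> (\<forall>k>D. \<forall>x. L k x = 0\<^sub>m N N)"

lemma modo_comp_compG: "modo_comp N A B = compG N (modo_bound N A) (modo_bound N B) A B"
  unfolding modo_comp_def compG_def by (intro ext) simp

lemma bound_le: "vanish N D L \<Longrightarrow> modo_bound N L \<le> D"
  unfolding modo_bound_def vanish_def by (rule Least_le) auto

lemma bound_vanish: "vanish N D L \<Longrightarrow> vanish N (modo_bound N L) L"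
  unfolding modo_bound_def vanish_def by (rule LeastI) auto

lemma is_modo_vanish: "is_modo N L \<Longrightarrow> vanish N (modo_bound N L) L"
  unfolding is_modo_def using bound_vanish unfolding vanish_def by blast

lemma vanish_mono: "vanish N D L \<Longrightarrow> D \<le> D' \<Longrightarrow> vanish N D' L"
  unfolding vanish_def by auto

lemma sum_atMost_ext:
  assumes "D1 \<le> D2" "\<And>k. D1 < k \<Longrightarrow> k \<le> D2 \<Longrightarrow> g k = 0"
  shows "(\<Sum>k\<le>D2. g k) = (\<Sum>k\<le>(D1::nat). (g k :: real))"
proof (rule sum.mono_neutral_right)
  show "{..D1} \<subseteq> {..D2}" using assms(1) by (auto simp: subset_eq)
  show "\<forall>i\<in>{..D2} - {..D1}. g i = 0" using assms(2) by auto
qed simp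

lemma applyG_ext:
  assumes "vanish N D1 L" "D1 \<le> D2" "r < N"
  shows "applyG N D2 L f r x = applyG N D1 L f r x"
  unfolding applyG_def
  by (rule sum_atMost_ext) (use assms in \<open>auto simp: vanish_def\<close>)

lemma modo_apply_G:
  assumes "vanish N D L" "r < N"
  shows "modo_apply N L f r x = applyG N D L f r x"
proof -
  have "modo_apply N L f r x = applyG N (modo_bound N L) L f r x"
    unfolding modo_apply_def applyG_def ..
  also have "\<dots> = applyG N D L f r x"
    using applyG_ext[OF bound_vanish[OF assms(1)] bound_le[OF assms(1)] assms(2)] by simp
  finally show ?thesis .
qed

lemma compG_ext:
  assumes "vanish N DA A" "DA \<le> DA'" "vanish N DB B" "DB \<le> DB'"
  shows "compG N DA' DB' A B = compG N DA DB A B"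
proof (intro ext eq_matI)
  fix k x r s assume rs: "r < dim_row (compG N DA DB A B k x)" "s < dim_col (compG N DA DB A B k x)"
  hence rs: "r < N" "s < N" by (auto simp: compG_def)
  let ?T = "\<lambda>m n i. (if m + n - i = k then
           of_nat (m choose i) *
             (\<Sum>t<N. A m x $$ (r, t) * (deriv ^^ i) (\<lambda>y. B n y $$ (t, s)) x)
         else 0) :: real"
  have "(\<Sum>m\<le>DA'. \<Sum>n\<le>DB'. \<Sum>i\<le>m. ?T m n i) = (\<Sum>m\<le>DA. \<Sum>n\<le>DB'. \<Sum>i\<le>m. ?T m n i)"
  proof (rule sum_atMost_ext)
    fix m assume m: "DA < m"
    hence "A m x = 0\<^sub>m N N" using assms(1) by (auto simp: vanish_def)
    hence "\<forall>t\<in>{..<N}. A m x $$ (r, t) = 0" using rs by simp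
    thus "(\<Sum>n\<le>DB'. \<Sum>i\<le>m. ?T m n i) = 0" by (auto intro!: sum.neutral)
  qed (use assms in auto)
  also have "\<dots> = (\<Sum>m\<le>DA. \<Sum>n\<le>DB. \<Sum>i\<le>m. ?T m n i)"
  proof (rule sum.cong[OF refl], rule sum_atMost_ext)
    fix m n assume n: "DB < n"
    have "(\<lambda>y. B n y $$ (t, s)) = (\<lambda>y. 0)" if "t < N" for t
      using assms(3) n that rs by (auto simp: vanish_def)
    hence "\<forall>i. \<forall>t\<in>{..<N}. (deriv ^^ i) (\<lambda>y. B n y $$ (t, s)) x = 0"
      by (simp add: higher_deriv_zero)
    thus "(\<Sum>i\<le>m. ?T m n i) = 0" by (auto intro!: sum.neutral)
  qed (use assms in auto)
  finally show "compG N DA' DB' A B k x $$ (r, s) = compG N DA DB A B k x $$ (r, s)"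
    using rs by (simp add: compG_def)
qed (auto simp: compG_def)

lemma compG_vanish:
  "vanish N (DA + DB) (compG N DA DB A B)"
  unfolding vanish_def
proof (intro allI impI)
  fix k x assume k: "DA + DB < k"
  show "compG N DA DB A B k x = 0\<^sub>m N N"
    by (rule eq_matI) (use k in \<open>auto simp: compG_def intro!: sum.neutral\<close>)
qed




lemma swap3: "(\<Sum>k\<in>K. \<Sum>m\<in>A. \<Sum>n\<in>B. \<Sum>i\<in>I m. g k m n i) =
   (\<Sum>m\<in>A. \<Sum>n\<in>B. \<Sum>i\<in>I m. \<Sum>k\<in>K. (g k m n i :: real))"
  by (subst sum.swap, rule sum.cong[OF refl], subst sum.swap, rule sum.cong[OF refl], rule sum.swap)

lemma swap_out: "(\<Sum>m\<in>A. \<Sum>n\<in>B. \<Sum>s\<in>S. h m n s) = (\<Sum>s\<in>S. \<Sum>m\<in>A. \<Sum>n\<in>B. (h m n s :: real))"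
  by (subst (2) sum.swap, rule sum.cong[OF refl], rule sum.swap)

lemma funpow_deriv_add: "(deriv ^^ a) ((deriv ^^ b) g) = (deriv ^^ (a + b)) g"
  by (simp add: funpow_add)

lemma is_modo_smooth: "is_modo N L \<Longrightarrow> i < N \<Longrightarrow> j < N \<Longrightarrow> smooth (\<lambda>x. L k x $$ (i, j))"
  unfolding is_modo_def by blast

lemma is_modo_carrier: "is_modo N L \<Longrightarrow> L k x \<in> carrier_mat N N"
  unfolding is_modo_def by blast

theorem comp_apply:
  assumes A: "is_modo N A" and B: "is_modo N B" and f: "\<And>s. s < N \<Longrightarrow> smooth (f s)"
    and r: "r < N"
  shows "modo_apply N (modo_comp N A B) f r x = modo_apply N A (\<lambda>s y. modo_apply N B f s y) r x"
proof -
  define a where "a = modo_bound N A"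
  define b where "b = modo_bound N B"
  define X where "X m n i s = of_nat (m choose i) *
             (\<Sum>t<N. A m x $$ (r, t) * (deriv ^^ i) (\<lambda>y. B n y $$ (t, s)) x)" for m n i s
  define F where "F s k = (deriv ^^ k) (f s) x" for s k
  have "modo_apply N (modo_comp N A B) f r x = applyG N (a + b) (compG N a b A B) f r x"
    unfolding modo_comp_compG a_def b_def by (rule modo_apply_G[OF compG_vanish r])
  also have "\<dots> = (\<Sum>k\<le>a+b. \<Sum>s<N. (\<Sum>m\<le>a. \<Sum>n\<le>b. \<Sum>i\<le>m.
            (if m + n - i = k then X m n i s else 0)) * F s k)"
    unfolding applyG_def compG_def X_def F_def using r by (intro sum.cong refl) auto
  also have "\<dots> = (\<Sum>s<N. \<Sum>k\<le>a+b. \<Sum>m\<le>a. \<Sum>n\<le>b. \<Sum>i\<le>m.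
            (if m + n - i = k then X m n i s else 0) * F s k)"
    by (subst sum.swap) (simp add: sum_distrib_right)
  also have "\<dots> = (\<Sum>s<N. \<Sum>m\<le>a. \<Sum>n\<le>b. \<Sum>i\<le>m. \<Sum>k\<le>a+b.
            (if m + n - i = k then X m n i s else 0) * F s k)"
    by (rule sum.cong[OF refl], rule swap3)
  also have "\<dots> = (\<Sum>s<N. \<Sum>m\<le>a. \<Sum>n\<le>b. \<Sum>i\<le>m. X m n i s * F s (m + n - i))"
  proof (intro sum.cong refl)
    fix s m n i assume "m \<in> {..a}" "n \<in> {..b}" "i \<in> {..m}"
    hence "m + n - i \<in> {..a+b}" by auto
    thus "(\<Sum>k\<le>a+b. (if m + n - i = k then X m n i s else 0) * F s k) = X m n i s * F s (m + n - i)"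
      by (simp add: if_distrib[of "\<lambda>z. z * _"] cong: if_cong)
  qed
  finally have L: "modo_apply N (modo_comp N A B) f r x =
     (\<Sum>s<N. \<Sum>m\<le>a. \<Sum>n\<le>b. \<Sum>i\<le>m. X m n i s * F s (m + n - i))" .

  have G: "(\<lambda>y. modo_apply N B f t y) = (\<lambda>y. \<Sum>n\<le>b. \<Sum>s<N. B n y $$ (t, s) * (deriv ^^ n) (f s) y)" for t
    unfolding modo_apply_def b_def ..
  have "modo_apply N A (\<lambda>s y. modo_apply N B f s y) r x =
      (\<Sum>m\<le>a. \<Sum>t<N. A m x $$ (r, t) * (deriv ^^ m) (\<lambda>y. modo_apply N B f t y) x)"
    unfolding modo_apply_def a_def ..
  also have "\<dots> = (\<Sum>m\<le>a. \<Sum>t<N. A m x $$ (r, t) * (\<Sum>n\<le>b. \<Sum>s<N. \<Sum>i=0..m.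
        of_nat (m choose i) * (deriv ^^ i) (\<lambda>y. B n y $$ (t, s)) x * F s (m + n - i)))"
  proof (intro sum.cong refl arg_cong2[where f="(*)"])
    fix m t assume t: "t \<in> {..<N}"
    have sm: "smooth (\<lambda>y. B n y $$ (t, s) * (deriv ^^ n) (f s) y)" if "s < N" for n s
      using t that by (intro smooth_mult is_modo_smooth[OF B] smooth_funpow f) auto
    have "(deriv ^^ m) (\<lambda>y. modo_apply N B f t y) x =
        (\<Sum>n\<le>b. (deriv ^^ m) (\<lambda>y. \<Sum>s<N. B n y $$ (t, s) * (deriv ^^ n) (f s) y) x)"
      unfolding G by (subst smooth_higher_deriv_sum) (auto intro!: smooth_sum sm)
    also have "\<dots> = (\<Sum>n\<le>b. \<Sum>s<N. (deriv ^^ m) (\<lambda>y. B n y $$ (t, s) * (deriv ^^ n) (f s) y) x)"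
      by (intro sum.cong refl, subst smooth_higher_deriv_sum) (auto intro!: sm)
    also have "\<dots> = (\<Sum>n\<le>b. \<Sum>s<N. \<Sum>i=0..m.
        of_nat (m choose i) * (deriv ^^ i) (\<lambda>y. B n y $$ (t, s)) x * F s (m + n - i))"
    proof (intro sum.cong refl)
      fix n s i assume s: "s \<in> {..<N}"
      show "(deriv ^^ m) (\<lambda>y. B n y $$ (t, s) * (deriv ^^ n) (f s) y) x =
        (\<Sum>i=0..m. of_nat (m choose i) * (deriv ^^ i) (\<lambda>y. B n y $$ (t, s)) x * F s (m + n - i))"
        unfolding F_def
        by (subst leibniz) (use s t in \<open>auto intro!: is_modo_smooth[OF B] smooth_funpow f sum.cong
             simp: funpow_deriv_add\<close>)
    qed
    finally show "(deriv ^^ m) (\<lambda>y. modo_apply N B f t y) x = (\<Sum>n\<le>b. \<Sum>s<N. \<Sum>i=0..m.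
        of_nat (m choose i) * (deriv ^^ i) (\<lambda>y. B n y $$ (t, s)) x * F s (m + n - i))" .
  qed
  also have "\<dots> = (\<Sum>m\<le>a. \<Sum>t<N. \<Sum>n\<le>b. \<Sum>s<N. \<Sum>i=0..m. A m x $$ (r, t) * (
        of_nat (m choose i) * (deriv ^^ i) (\<lambda>y. B n y $$ (t, s)) x * F s (m + n - i)))"
    by (simp add: sum_distrib_left)
  also have "\<dots> = (\<Sum>m\<le>a. \<Sum>n\<le>b. \<Sum>s<N. \<Sum>i=0..m. \<Sum>t<N. A m x $$ (r, t) * (
        of_nat (m choose i) * (deriv ^^ i) (\<lambda>y. B n y $$ (t, s)) x * F s (m + n - i)))"
    by (rule sum.cong[OF refl], rule swap3)
  also have "\<dots> = (\<Sum>s<N. \<Sum>m\<le>a. \<Sum>n\<le>b. \<Sum>i=0..m. \<Sum>t<N. A m x $$ (r, t) * (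
        of_nat (m choose i) * (deriv ^^ i) (\<lambda>y. B n y $$ (t, s)) x * F s (m + n - i)))"
    by (rule swap_out)
  also have "\<dots> = (\<Sum>s<N. \<Sum>m\<le>a. \<Sum>n\<le>b. \<Sum>i\<le>m. X m n i s * F s (m + n - i))"
    unfolding X_def atLeast0AtMost
    by (intro sum.cong refl) (simp add: sum_distrib_left sum_distrib_right ac_simps)
  finally show ?thesis using L by simp
qed




lemma compG_smooth:
  assumes A: "is_modo N A" and B: "is_modo N B" and rs: "r < N" "s < N"
  shows "smooth (\<lambda>x. compG N DA DB A B k x $$ (r, s))"
proof -
  have eq: "(\<lambda>x. compG N DA DB A B k x $$ (r, s)) = (\<lambda>x. \<Sum>m\<le>DA. \<Sum>n\<le>DB. \<Sum>i\<le>m.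
        (if m + n - i = k then
           of_nat (m choose i) *
             (\<Sum>t<N. A m x $$ (r, t) * (deriv ^^ i) (\<lambda>y. B n y $$ (t, s)) x)
         else 0))"
    using rs by (simp add: compG_def)
  show ?thesis unfolding eq using rs
    by (intro smooth_sum smooth_if smooth_mult smooth_const is_modo_smooth[OF A] smooth_funpow
        is_modo_smooth[OF B]) auto
qed

lemma compG_carrier: "compG N DA DB A B k x \<in> carrier_mat N N"
  by (simp add: compG_def)

lemma is_modo_compG: "is_modo N A \<Longrightarrow> is_modo N B \<Longrightarrow> is_modo N (compG N DA DB A B)"
proof -
  assume A: "is_modo N A" and B: "is_modo N B"
  show ?thesis unfolding is_modo_def
  proof (intro conjI allI impI)
    show "compG N DA DB A B k x \<in> carrier_mat N N" for k x by (rule compG_carrier)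
    show "smooth (\<lambda>x. compG N DA DB A B k x $$ (i, j))" if "i < N" "j < N" for k i j
      using compG_smooth[OF A B that] .
    show "\<exists>d. \<forall>k>d. \<forall>x. compG N DA DB A B k x = 0\<^sub>m N N"
      using compG_vanish[of N DA DB A B] unfolding vanish_def by blast
  qed
qed

lemma compG_add:
  assumes "\<And>k x. A1 k x \<in> carrier_mat N N" "\<And>k x. A2 k x \<in> carrier_mat N N"
  shows "compG N DA DB (\<lambda>k x. A1 k x + A2 k x) B k x = compG N DA DB A1 B k x + compG N DA DB A2 B k x"
proof (rule eq_matI)
  fix r s assume "r < dim_row (compG N DA DB A1 B k x + compG N DA DB A2 B k x)"
      "s < dim_col (compG N DA DB A1 B k x + compG N DA DB A2 B k x)"
  hence rs: "r < N" "s < N" by (auto simp: compG_def)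
  have c: "\<And>t. t < N \<Longrightarrow> (A1 m x + A2 m x) $$ (r, t) = A1 m x $$ (r, t) + A2 m x $$ (r, t)" for m
    using assms[of m x] rs by simp
  show "compG N DA DB (\<lambda>k x. A1 k x + A2 k x) B k x $$ (r, s) =
      (compG N DA DB A1 B k x + compG N DA DB A2 B k x) $$ (r, s)"
  proof -
    have ifa: "\<And>c a b::real. (if c then a + b else 0) = (if c then a else 0) + (if c then b else 0)"
      by simp
    have st: "(\<Sum>t<N. (A1 m x + A2 m x) $$ (r, t) * D t) =
       (\<Sum>t<N. A1 m x $$ (r, t) * D t) + (\<Sum>t<N. A2 m x $$ (r, t) * D t)" for m D
      by (subst sum.distrib[symmetric], rule sum.cong) (auto simp: c distrib_right)
    define D where "D n i t = (deriv ^^ i) (\<lambda>y. B n y $$ (t, s)) x" for m n i t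
    have "compG N DA DB (\<lambda>k x. A1 k x + A2 k x) B k x $$ (r, s) = (\<Sum>m\<le>DA. \<Sum>n\<le>DB. \<Sum>i\<le>m.
        (if m + n - i = k then of_nat (m choose i) * (\<Sum>t<N. (A1 m x + A2 m x) $$ (r, t) * D n i t) else 0))"
      unfolding D_def using rs by (simp add: compG_def)
    also have "\<dots> = (\<Sum>m\<le>DA. \<Sum>n\<le>DB. \<Sum>i\<le>m.
        (if m + n - i = k then of_nat (m choose i) * (\<Sum>t<N. A1 m x $$ (r, t) * D n i t) else 0)
      + (if m + n - i = k then of_nat (m choose i) * (\<Sum>t<N. A2 m x $$ (r, t) * D n i t) else 0))"
      by (intro sum.cong refl) (simp add: st distrib_left)
    also have "\<dots> = compG N DA DB A1 B k x $$ (r, s) + compG N DA DB A2 B k x $$ (r, s)"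
      unfolding D_def using rs by (simp add: compG_def sum.distrib)
    finally show ?thesis using rs by (simp add: compG_def)
  qed
qed (auto simp: compG_def)

lemma compG_top:
  assumes P: "vanish N j P" "\<And>k x. P k x \<in> carrier_mat N N" and B: "\<And>x. B Mb x = 1\<^sub>m N"
  shows "compG N j Mb P B (j + Mb) x = P j x"
proof (rule eq_matI)
  fix r s assume "r < dim_row (P j x)" "s < dim_col (P j x)"
  hence rs: "r < N" "s < N" using P(2)[of j x] by auto
  define X where "X m n i = of_nat (m choose i) *
             (\<Sum>t<N. P m x $$ (r, t) * (deriv ^^ i) (\<lambda>y. B n y $$ (t, s)) x)" for m n i
  have "compG N j Mb P B (j + Mb) x $$ (r, s) = (\<Sum>m\<le>j. \<Sum>n\<le>Mb. \<Sum>i\<le>m.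
        (if m + n - i = j + Mb then X m n i else 0))"
    unfolding compG_def X_def using rs by simp
  also have "\<dots> = (\<Sum>m\<le>j. \<Sum>n\<le>Mb. \<Sum>i\<le>m.
        (if m = j \<and> n = Mb \<and> i = 0 then X m n i else 0))"
    by (intro sum.cong refl) auto
  also have "\<dots> = X j Mb 0"
  proof -
    have 1: "(\<Sum>i\<le>m. if m = j \<and> n = Mb \<and> i = 0 then X m n i else 0) = (if m = j \<and> n = Mb then X j Mb 0 else 0)" for m n
      by (cases "m = j \<and> n = Mb") (auto simp: sum.delta' intro!: sum.neutral)
    have 2: "(\<Sum>n\<le>Mb. if m = j \<and> n = Mb then X j Mb 0 else 0) = (if m = j then X j Mb 0 else 0)" for m
      by (cases "m = j") (simp_all add: sum.delta')
    show ?thesis by (simp add: 1 2 sum.delta')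
  qed
  also have "\<dots> = P j x $$ (r, s)"
    unfolding X_def B using rs
    by (simp add: if_distrib[of "\<lambda>z. _ * z"] sum.delta sum.delta' cong: if_cong)
  finally show "compG N j Mb P B (j + Mb) x $$ (r, s) = P j x $$ (r, s)" .
qed (use P(2)[of j x] in \<open>auto simp: compG_def\<close>)

lemma applyG_sub:
  assumes "\<And>k x. L1 k x \<in> carrier_mat N N" "\<And>k x. L2 k x \<in> carrier_mat N N" "r < N"
  shows "applyG N D (\<lambda>k x. L1 k x - L2 k x) f r x = applyG N D L1 f r x - applyG N D L2 f r x"
proof -
  have c: "(L1 k x - L2 k x) $$ (r, s) = L1 k x $$ (r, s) - L2 k x $$ (r, s)" if "s < N" for s k
    using assms(1,2)[of k x] assms(3) that by simp
  show ?thesis unfolding applyG_def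
    by (simp add: c sum_subtractf left_diff_distrib)
qed

lemma modo_apply_zero_fun:
  assumes "\<And>s y. s < N \<Longrightarrow> g s y = 0"
  shows "modo_apply N P g r x = 0"
proof -
  have "\<And>s. s \<in> {..<N} \<Longrightarrow> g s = (\<lambda>y. 0)" using assms by auto
  thus ?thesis unfolding modo_apply_def by (simp add: higher_deriv_zero)
qed




lemma mult_index:
  assumes "R \<in> carrier_mat n m" "S \<in> carrier_mat m p" "i < n" "j < p"
  shows "(R * S) $$ (i, j) = (\<Sum>a<m. R $$ (i, a) * S $$ (a, j))"
  using assms by (simp add: scalar_prod_def atLeast0LessThan)

lemma sum_lessThan_add: "(\<Sum>a<m + (n::nat). g a) = (\<Sum>a<m. g a) + (\<Sum>s<n. (g (m + s) :: real))"
  by (induction n) (auto simp: add.assoc)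

lemma sum_reindex_MN: "(\<Sum>a<(M::nat) * N. g a) = (\<Sum>k<M. \<Sum>s<N. (g (k * N + s) :: real))"
proof (induction M)
  case (Suc M)
  have "(\<Sum>a<Suc M * N. g a) = (\<Sum>a<M * N + N. g a)" by (simp add: add.commute)
  also have "\<dots> = (\<Sum>a<M * N. g a) + (\<Sum>s<N. g (M * N + s))" by (rule sum_lessThan_add)
  finally show ?case using Suc by simp
qed simp

lemma divmod_kN: "s < (N::nat) \<Longrightarrow> (k * N + s) div N = k \<and> (k * N + s) mod N = s"
  by auto

lemma lt_MN: "k < (M::nat) \<Longrightarrow> s < N \<Longrightarrow> k * N + s < M * N"
proof -
  assume "k < M" "s < N"
  hence "k * N + s < k * N + N" by simp
  also have "\<dots> = Suc k * N" by simp
  also have "\<dots> \<le> M * N" using \<open>k < M\<close> by (intro mult_le_mono1) simp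
  finally show ?thesis .
qed

lemma sum_delta_one: "s < (N::nat) \<Longrightarrow> (\<Sum>t<N. (a t :: real) * (if t = s then 1 else 0)) = a s"
  by (simp add: if_distrib[of "\<lambda>z. _ * z"] sum.delta' sum.delta cong: if_cong)

context
  fixes M N :: nat and phi :: "nat \<Rightarrow> nat \<Rightarrow> real \<Rightarrow> real"
  assumes M1: "M \<ge> 1" and N1: "N \<ge> 1"
    and sm: "\<forall>i<M * N. \<forall>r<N. smooth (phi i r)"
    and dt: "\<forall>x. det (wronskian M N phi x) \<noteq> 0"
begin

abbreviation "W \<equiv> wronskian M N phi"
abbreviation "T \<equiv> top_deriv_row M N phi"
abbreviation "K \<equiv> Kop M N phi"

lemma W_carrier: "W x \<in> carrier_mat (M * N) (M * N)"
  unfolding wronskian_def by simp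

lemma T_carrier: "T x \<in> carrier_mat N (M * N)"
  unfolding top_deriv_row_def by simp

lemma W_index: "k < M \<Longrightarrow> s < N \<Longrightarrow> i < M * N \<Longrightarrow> W x $$ (k * N + s, i) = (deriv ^^ k) (phi i s) x"
  unfolding wronskian_def using lt_MN[of k M s N] by (simp add: divmod_kN)

lemma W_index': "a < M * N \<Longrightarrow> i < M * N \<Longrightarrow> W x $$ (a, i) = (deriv ^^ (a div N)) (phi i (a mod N)) x"
  unfolding wronskian_def by simp

lemma W_inv: "inv_mat (W x) \<in> carrier_mat (M * N) (M * N)" "W x * inv_mat (W x) = 1\<^sub>m (M * N)"
   "inv_mat (W x) * W x = 1\<^sub>m (M * N)"
  using inv_mat_adj[OF W_carrier dt[rule_format]] by auto

lemma row_zero: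
  assumes "\<And>i. i < M * N \<Longrightarrow> (\<Sum>a<M * N. u a * W x $$ (a, i)) = 0" "a < M * N"
  shows "u a = 0"
proof -
  define U where "U = mat 1 (M * N) (\<lambda>(_, a). u a)"
  have Uc: "U \<in> carrier_mat 1 (M * N)" unfolding U_def by simp
  have UW: "U * W x = 0\<^sub>m 1 (M * N)"
  proof (rule eq_matI)
    fix i j assume "i < dim_row (0\<^sub>m 1 (M * N))" "j < dim_col (0\<^sub>m 1 (M * N))"
    hence ij: "i = 0" "j < M * N" by auto
    show "(U * W x) $$ (i, j) = 0\<^sub>m 1 (M * N) $$ (i, j)"
      using mult_index[OF Uc W_carrier, of i j] ij assms(1)[of j] by (simp add: U_def)
  qed (use Uc W_carrier in auto)
  have "U = U * (W x * inv_mat (W x))" using W_inv Uc by simp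
  also have "\<dots> = (U * W x) * inv_mat (W x)"
    using Uc W_carrier W_inv(1) by (simp add: assoc_mult_mat[of _ 1 "M*N" _ "M*N" _ "M*N"])
  also have "\<dots> = 0\<^sub>m 1 (M * N)" using UW W_inv(1) by (simp add: left_mult_zero_mat)
  finally have "U $$ (0, a) = 0" using assms(2) by simp
  thus ?thesis using assms(2) by (simp add: U_def)
qed

lemma smooth_W: "a < M * N \<Longrightarrow> i < M * N \<Longrightarrow> smooth (\<lambda>x. W x $$ (a, i))"
proof -
  assume a: "a < M * N" and i: "i < M * N"
  have "a mod N < N" using N1 by simp
  hence "smooth ((deriv ^^ (a div N)) (phi i (a mod N)))" using sm i by (intro smooth_funpow) auto
  thus ?thesis using W_index'[OF a i] by simp
qed

lemma smooth_T: "r < N \<Longrightarrow> i < M * N \<Longrightarrow> smooth (\<lambda>x. T x $$ (r, i))"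
  unfolding top_deriv_row_def using sm by (simp add: smooth_funpow)

lemma apply_split:
  assumes L: "vanish N M L" "\<And>k x. L k x \<in> carrier_mat N N" and i: "i < M * N" and r: "r < N"
  shows "modo_apply N L (phi i) r x = (\<Sum>s<N. L M x $$ (r, s) * (deriv ^^ M) (phi i s) x)
      + (\<Sum>a<M * N. L (a div N) x $$ (r, a mod N) * W x $$ (a, i))"
proof -
  have "modo_apply N L (phi i) r x = applyG N M L (phi i) r x" by (rule modo_apply_G[OF L(1) r])
  also have "\<dots> = (\<Sum>k<M. \<Sum>s<N. L k x $$ (r, s) * (deriv ^^ k) (phi i s) x)
        + (\<Sum>s<N. L M x $$ (r, s) * (deriv ^^ M) (phi i s) x)"
    unfolding applyG_def lessThan_Suc_atMost[symmetric] by simp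
  also have "(\<Sum>k<M. \<Sum>s<N. L k x $$ (r, s) * (deriv ^^ k) (phi i s) x)
       = (\<Sum>a<M * N. L (a div N) x $$ (r, a mod N) * W x $$ (a, i))"
    unfolding sum_reindex_MN using i by (intro sum.cong refl) (auto simp: divmod_kN W_index)
  finally show ?thesis by simp
qed

lemma div_lt: "a < M * N \<Longrightarrow> a div N < M"
  by (simp add: less_mult_imp_div_less)

lemma mod_lt: "a mod N < N" using N1 by simp

lemma P_carrier: "T x * inv_mat (W x) \<in> carrier_mat N (M * N)"
  using T_carrier W_inv(1) by (rule mult_carrier_mat)

lemma K_carrier: "K k x \<in> carrier_mat N N"
  unfolding Kop_def coeffC_def Let_def by auto

lemma K_M: "K M x = 1\<^sub>m N" unfolding Kop_def by simp

lemma K_vanish: "vanish N M K" unfolding vanish_def Kop_def by auto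

lemma K_low: "k < M \<Longrightarrow> r < N \<Longrightarrow> s < N \<Longrightarrow>
   K k x $$ (r, s) = - (T x * inv_mat (W x)) $$ (r, k * N + s)"
  unfolding Kop_def coeffC_def Let_def by simp

lemma K_low': "a < M * N \<Longrightarrow> r < N \<Longrightarrow>
   K (a div N) x $$ (r, a mod N) = - (T x * inv_mat (W x)) $$ (r, a)"
proof -
  assume a: "a < M * N" and r: "r < N"
  have "a div N * N + a mod N = a" by (rule div_mult_mod_eq)
  thus ?thesis using K_low[of "a div N" r "a mod N" x] div_lt[OF a] mod_lt r by simp
qed

lemma K_is_modo: "is_modo N K"
  unfolding is_modo_def
proof (intro conjI allI impI)
  show "K k x \<in> carrier_mat N N" for k x by (rule K_carrier)
  show "\<exists>d. \<forall>k>d. \<forall>x. K k x = 0\<^sub>m N N" using K_vanish unfolding vanish_def by blast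
  fix k i j assume ij: "i < N" "j < N"
  consider "k = M" | "k < M" | "k > M" by linarith
  thus "smooth (\<lambda>x. K k x $$ (i, j))"
  proof cases
    case 1 thus ?thesis using ij by (simp add: K_M)
  next
    case 3 thus ?thesis using ij by (simp add: Kop_def)
  next
    case 2
    have kj: "k * N + j < M * N" using lt_MN 2 ij by blast
    have eq: "(\<lambda>x. K k x $$ (i, j)) = (\<lambda>x. - (\<Sum>a<M * N. T x $$ (i, a) * inv_mat (W x) $$ (a, k * N + j)))"
      using K_low[OF 2 ij] mult_index[OF T_carrier W_inv(1) ij(1) kj] by simp
    have "smooth (\<lambda>x. inv_mat (W x) $$ (a, k * N + j))" if "a < M * N" for a
      by (rule smooth_inv_mat[OF W_carrier smooth_W]) (use dt that kj in auto)
    thus ?thesis unfolding eq using ij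
      by (intro smooth_minus smooth_sum smooth_mult smooth_T) auto
  qed
qed

lemma K_monic: "monic_modo N M K"
  unfolding monic_modo_def using K_is_modo K_M K_vanish by (auto simp: vanish_def)

lemma K_annihil: "i < M * N \<Longrightarrow> annihilates N K (phi i)"
  unfolding annihilates_def
proof (intro allI impI)
  fix r x assume i: "i < M * N" and r: "r < N"
  have "(\<Sum>a<M * N. K (a div N) x $$ (r, a mod N) * W x $$ (a, i)) =
     - (\<Sum>a<M * N. (T x * inv_mat (W x)) $$ (r, a) * W x $$ (a, i))"
    by (simp add: K_low' r sum_negf)
  also have "\<dots> = - ((T x * inv_mat (W x)) * W x) $$ (r, i)"
    using mult_index[OF P_carrier W_carrier r i] by simp
  also have "\<dots> = - T x $$ (r, i)"
    using T_carrier W_inv W_carrier by (simp add: assoc_mult_mat[of _ N "M*N" _ "M*N" _ "M*N"] right_mult_one_mat[OF T_carrier])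
  finally have 2: "(\<Sum>a<M * N. K (a div N) x $$ (r, a mod N) * W x $$ (a, i)) = - T x $$ (r, i)" .
  have 1: "(\<Sum>s<N. K M x $$ (r, s) * (deriv ^^ M) (phi i s) x) = T x $$ (r, i)"
    unfolding K_M using r i
    by (simp add: top_deriv_row_def if_distrib[of "\<lambda>z. z * _"] sum.delta sum.delta' cong: if_cong)
  show "modo_apply N K (phi i) r x = 0"
    using apply_split[OF K_vanish K_carrier i r] 1 2 by simp
qed

lemma K_unique:
  assumes K': "monic_modo N M K'" and an: "\<forall>i<M * N. annihilates N K' (phi i)"
  shows "K' = K"
proof (intro ext)
  fix k x
  have K'v: "vanish N M K'" and K'M: "K' M x = 1\<^sub>m N" and K'c: "\<And>k x. K' k x \<in> carrier_mat N N"
    using K' unfolding monic_modo_def vanish_def is_modo_def by auto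
  have eqa: "K' (a div N) x $$ (r, a mod N) = K (a div N) x $$ (r, a mod N)"
    if r: "r < N" and a: "a < M * N" for r a
  proof -
    have "K' (a div N) x $$ (r, a mod N) - K (a div N) x $$ (r, a mod N) = 0"
    proof (rule row_zero[OF _ a])
      fix i assume i: "i < M * N"
      have "modo_apply N K' (phi i) r x = 0" using an i r unfolding annihilates_def by blast
      moreover have "modo_apply N K (phi i) r x = 0" using K_annihil i r unfolding annihilates_def by blast
      ultimately show "(\<Sum>a<M * N. (K' (a div N) x $$ (r, a mod N) - K (a div N) x $$ (r, a mod N)) * W x $$ (a, i)) = 0"
        using apply_split[OF K'v K'c i r] apply_split[OF K_vanish K_carrier i r] K'M K_M
        by (simp add: left_diff_distrib sum_subtractf)
    qed
    thus ?thesis by simp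
  qed
  consider "k = M" | "k < M" | "k > M" by linarith
  thus "K' k x = K k x"
  proof cases
    case 1 thus ?thesis using K'M K_M by simp
  next
    case 3 thus ?thesis using K' unfolding monic_modo_def by (simp add: Kop_def)
  next
    case 2
    show ?thesis
    proof (rule eq_matI)
      fix r s assume "r < dim_row (K k x)" "s < dim_col (K k x)"
      hence rs: "r < N" "s < N" using K_carrier[of k x] by auto
      show "K' k x $$ (r, s) = K k x $$ (r, s)"
        using eqa[OF rs(1) lt_MN[OF 2 rs(2)]] rs by (simp add: divmod_kN)
    qed (use K_carrier[of k x] K'c[of k x] in auto)
  qed
qed

lemma base_zero:
  assumes L: "is_modo N L" "vanish N d L" and d: "d < M"
    and an: "\<forall>i<M * N. annihilates N L (phi i)"
  shows "L k x = 0\<^sub>m N N"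
proof -
  have Lc: "\<And>k x. L k x \<in> carrier_mat N N" using L(1) unfolding is_modo_def by blast
  have LM: "vanish N M L" using vanish_mono[OF L(2)] d by simp
  have L0: "L M x = 0\<^sub>m N N" using L(2) d unfolding vanish_def by simp
  have ua: "L (a div N) x $$ (r, a mod N) = 0" if r: "r < N" and a: "a < M * N" for r a
  proof (rule row_zero[OF _ a])
    fix i assume i: "i < M * N"
    have "modo_apply N L (phi i) r x = 0" using an i r unfolding annihilates_def by blast
    thus "(\<Sum>a<M * N. L (a div N) x $$ (r, a mod N) * W x $$ (a, i)) = 0"
      using apply_split[OF LM Lc i r] L0 r by simp
  qed
  show ?thesis
  proof (cases "k < M")
    case True
    show ?thesis
    proof (rule eq_matI)
      fix r s assume "r < dim_row (0\<^sub>m N N :: real mat)" "s < dim_col (0\<^sub>m N N :: real mat)"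
      hence rs: "r < N" "s < N" by auto
      show "L k x $$ (r, s) = 0\<^sub>m N N $$ (r, s)"
        using ua[OF rs(1) lt_MN[OF True rs(2)]] rs by (simp add: divmod_kN)
    qed (use Lc[of k x] in auto)
  next
    case False thus ?thesis using L(2) d unfolding vanish_def by simp
  qed
qed

lemma zero_comp: "modo_comp N (\<lambda>k x. 0\<^sub>m N N) B = (\<lambda>k x. 0\<^sub>m N N)"
proof (intro ext eq_matI)
  fix k x r s assume "r < dim_row (0\<^sub>m N N :: real mat)" "s < dim_col (0\<^sub>m N N :: real mat)"
  hence rs: "r < N" "s < N" by auto
  have "\<forall>m. \<forall>t\<in>{..<N}. (0\<^sub>m N N :: real mat) $$ (r, t) = 0" using rs by simp
  thus "modo_comp N (\<lambda>k x. 0\<^sub>m N N) B k x $$ (r, s) = 0\<^sub>m N N $$ (r, s)"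
    using rs by (auto simp: modo_comp_def intro!: sum.neutral)
qed (auto simp: modo_comp_def)

lemma division:
  "\<forall>L. is_modo N L \<and> vanish N d L \<and> (\<forall>i<M * N. annihilates N L (phi i))
     \<longrightarrow> (\<exists>Q. is_modo N Q \<and> L = modo_comp N Q K)"
proof (induction d)
  have base: "\<exists>Q. is_modo N Q \<and> L = modo_comp N Q K"
    if "is_modo N L" "vanish N d L" "d < M" "\<forall>i<M * N. annihilates N L (phi i)" for L d
  proof (intro exI conjI)
    show "is_modo N (\<lambda>k x. 0\<^sub>m N N)" unfolding is_modo_def by auto
    show "L = modo_comp N (\<lambda>k x. 0\<^sub>m N N) K"
      unfolding zero_comp using base_zero[OF that] by (intro ext) auto
  qed
  {
    case 0 show ?case using base M1 by auto
  next
    case (Suc d)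
    show ?case
    proof (intro allI impI)
      fix L assume H: "is_modo N L \<and> vanish N (Suc d) L \<and> (\<forall>i<M * N. annihilates N L (phi i))"
      hence L: "is_modo N L" "vanish N (Suc d) L" and an: "\<forall>i<M * N. annihilates N L (phi i)" by auto
      show "\<exists>Q. is_modo N Q \<and> L = modo_comp N Q K"
      proof (cases "Suc d < M")
        case True thus ?thesis using base L an by blast
      next
        case False
        define D where "D = Suc d"
        define j where "j = D - M"
        have jM: "j + M = D" using False unfolding j_def D_def by simp
        have Lc: "\<And>k x. L k x \<in> carrier_mat N N" using L(1) unfolding is_modo_def by blast
        define P where "P = (\<lambda>k x. if k = j then L D x else 0\<^sub>m N N)"
        have Pc: "\<And>k x. P k x \<in> carrier_mat N N" unfolding P_def using Lc by auto
        have Pv: "vanish N j P" unfolding vanish_def P_def by auto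
        have Pm: "is_modo N P" unfolding is_modo_def
        proof (intro conjI allI impI)
          show "P k x \<in> carrier_mat N N" for k x by (rule Pc)
          show "\<exists>d. \<forall>k>d. \<forall>x. P k x = 0\<^sub>m N N" using Pv unfolding vanish_def by blast
          fix k r s assume rs: "r < N" "s < N"
          show "smooth (\<lambda>x. P k x $$ (r, s))"
            using is_modo_smooth[OF L(1) rs, of D] rs by (cases "k = j") (auto simp: P_def)
        qed
        define C where "C = compG N j M P K"
        have PC: "modo_comp N P K = C" unfolding C_def modo_comp_compG
          by (rule compG_ext[OF bound_vanish[OF Pv] bound_le[OF Pv] bound_vanish[OF K_vanish] bound_le[OF K_vanish], symmetric])
        have Cm: "is_modo N C" unfolding C_def by (rule is_modo_compG[OF Pm K_is_modo])
        have Cv: "vanish N D C" unfolding C_def using compG_vanish[of N j M P K] jM by simp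
        have Cc: "\<And>k x. C k x \<in> carrier_mat N N" unfolding C_def by (rule compG_carrier)
        have CD: "C D x = L D x" for x
          unfolding C_def using compG_top[where N=N and j=j and P=P and B=K and Mb=M and x=x, OF Pv Pc K_M] jM by (simp add: P_def)
        define L' where "L' = (\<lambda>k x. L k x - C k x)"
        have L'c: "\<And>k x. L' k x \<in> carrier_mat N N" unfolding L'_def using Lc Cc by (metis minus_carrier_mat)
        have L'e: "L' k x $$ (r, s) = L k x $$ (r, s) - C k x $$ (r, s)" if "r < N" "s < N" for k x r s
          unfolding L'_def using that Cc[of k x] by simp
        have L'v: "vanish N d L'" unfolding vanish_def
        proof (intro allI impI)
          fix k x assume k: "d < k"
          show "L' k x = 0\<^sub>m N N"
          proof (rule eq_matI)
            fix r s assume "r < dim_row (0\<^sub>m N N :: real mat)" "s < dim_col (0\<^sub>m N N :: real mat)"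
            hence rs: "r < N" "s < N" by auto
            show "L' k x $$ (r, s) = 0\<^sub>m N N $$ (r, s)"
            proof (cases "k = D")
              case True thus ?thesis using L'e[OF rs] CD rs by simp
            next
              case False hence "k > D" using k D_def by simp
              thus ?thesis using L'e[OF rs] rs L(2) Cv unfolding vanish_def D_def by simp
            qed
          qed (use L'c[of k x] in auto)
        qed
        have L'm: "is_modo N L'" unfolding is_modo_def
        proof (intro conjI allI impI)
          show "L' k x \<in> carrier_mat N N" for k x by (rule L'c)
          show "\<exists>d. \<forall>k>d. \<forall>x. L' k x = 0\<^sub>m N N" using L'v unfolding vanish_def by blast
          fix k r s assume rs: "r < N" "s < N"
          have "(\<lambda>x. L' k x $$ (r, s)) = (\<lambda>x. L k x $$ (r, s) - C k x $$ (r, s))"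
            using L'e[OF rs] by auto
          thus "smooth (\<lambda>x. L' k x $$ (r, s))"
            using smooth_diff[OF is_modo_smooth[OF L(1) rs] is_modo_smooth[OF Cm rs]] by simp
        qed
        have L'a: "\<forall>i<M * N. annihilates N L' (phi i)" unfolding annihilates_def
        proof (intro allI impI)
          fix i r x assume i: "i < M * N" and r: "r < N"
          have LD: "vanish N D L" using L(2) D_def by simp
          have L'D: "vanish N D L'" using vanish_mono[OF L'v] D_def by simp
          have "modo_apply N L' (phi i) r x = applyG N D L' (phi i) r x" by (rule modo_apply_G[OF L'D r])
          also have "\<dots> = applyG N D L (phi i) r x - applyG N D C (phi i) r x"
            unfolding L'_def by (rule applyG_sub[OF Lc Cc r])
          also have "\<dots> = modo_apply N L (phi i) r x - modo_apply N (modo_comp N P K) (phi i) r x"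
            unfolding PC using modo_apply_G[OF LD r] modo_apply_G[OF Cv r] by simp
          also have "modo_apply N (modo_comp N P K) (phi i) r x =
              modo_apply N P (\<lambda>s y. modo_apply N K (phi i) s y) r x"
            by (rule comp_apply[OF Pm K_is_modo _ r]) (use sm i in auto)
          also have "\<dots> = 0"
            by (rule modo_apply_zero_fun) (use K_annihil[OF i] in \<open>auto simp: annihilates_def\<close>)
          finally show "modo_apply N L' (phi i) r x = 0" using an i r unfolding annihilates_def by simp
        qed
        obtain Q' where Q': "is_modo N Q'" "L' = modo_comp N Q' K"
          using Suc.IH L'm L'v L'a by blast
        define DQ where "DQ = max (modo_bound N Q') j"
        define Q where "Q = (\<lambda>k x. Q' k x + P k x)"
        have Q'c: "\<And>k x. Q' k x \<in> carrier_mat N N" using Q'(1) unfolding is_modo_def by blast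
        have Q'v: "vanish N (modo_bound N Q') Q'" by (rule is_modo_vanish[OF Q'(1)])
        have Qv: "vanish N DQ Q" using Q'v Pv Q'c Pc unfolding vanish_def Q_def DQ_def by auto
        have Qm: "is_modo N Q" unfolding is_modo_def
        proof (intro conjI allI impI)
          show "Q k x \<in> carrier_mat N N" for k x unfolding Q_def using Q'c Pc by auto
          show "\<exists>d. \<forall>k>d. \<forall>x. Q k x = 0\<^sub>m N N" using Qv unfolding vanish_def by blast
          fix k r s assume rs: "r < N" "s < N"
          have "(\<lambda>x. Q k x $$ (r, s)) = (\<lambda>x. Q' k x $$ (r, s) + P k x $$ (r, s))"
            unfolding Q_def using rs Pc[of k] by (intro ext) (metis carrier_matD index_add_mat(1))
          thus "smooth (\<lambda>x. Q k x $$ (r, s))"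
            using smooth_add[OF is_modo_smooth[OF Q'(1) rs] is_modo_smooth[OF Pm rs]] by simp
        qed
        have e1: "modo_comp N Q K = compG N DQ M Q K" unfolding modo_comp_compG
          by (rule compG_ext[OF bound_vanish[OF Qv] bound_le[OF Qv] bound_vanish[OF K_vanish] bound_le[OF K_vanish], symmetric])
        have e2: "compG N DQ M Q' K = modo_comp N Q' K" unfolding modo_comp_compG
          by (rule compG_ext[OF bound_vanish[OF Q'v] _ bound_vanish[OF K_vanish] bound_le[OF K_vanish]])
             (use bound_le[OF Q'v] in \<open>simp add: DQ_def\<close>)
        have e3: "compG N DQ M P K = C" unfolding C_def
          by (rule compG_ext[OF Pv _ K_vanish]) (auto simp: DQ_def)
        show ?thesis
        proof (intro exI conjI)
          show "is_modo N Q" by (rule Qm)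
          show "L = modo_comp N Q K"
          proof (intro ext)
            fix k x
            have "modo_comp N Q K k x = compG N DQ M Q' K k x + compG N DQ M P K k x"
              by (subst e1, unfold Q_def, rule compG_add[OF Q'c Pc])
            also have "\<dots> = L' k x + C k x" unfolding e2 e3 Q'(2) ..
            also have "\<dots> = L k x"
            proof (rule eq_matI)
              fix r s assume "r < dim_row (L k x)" "s < dim_col (L k x)"
              hence rs: "r < N" "s < N" using Lc[of k x] by auto
              show "(L' k x + C k x) $$ (r, s) = L k x $$ (r, s)"
                using L'e[OF rs] rs Cc[of k x] by simp
            qed (use Lc[of k x] Cc[of k x] in auto)
            finally show "L k x = modo_comp N Q K k x" ..
          qed
        qed
      qed
    qed
  }
qed

end

theorem theorem2:
  fixes M N :: nat and phi :: "nat \<Rightarrow> nat \<Rightarrow> real \<Rightarrow> real"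
  assumes "M \<ge> 1" and "N \<ge> 1"
    and "\<forall>i<M * N. \<forall>r<N. smooth (phi i r)"
    and "\<forall>x. det (wronskian M N phi x) \<noteq> 0"
  shows "(monic_modo N M (Kop M N phi)
          \<and> (\<forall>i<M * N. annihilates N (Kop M N phi) (phi i))
          \<and> (\<forall>K'. monic_modo N M K' \<and> (\<forall>i<M * N. annihilates N K' (phi i))
                  \<longrightarrow> K' = Kop M N phi))
       \<and> (\<forall>L. is_modo N L \<and> (\<forall>i<M * N. annihilates N L (phi i))
              \<longrightarrow> (\<exists>Q. is_modo N Q \<and> L = modo_comp N Q (Kop M N phi)))"
proof (intro conjI allI impI)
  show "monic_modo N M (Kop M N phi)" by (rule K_monic[OF assms])
  show "annihilates N (Kop M N phi) (phi i)" if "i < M * N" for i by (rule K_annihil[OF assms that])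
  show "K' = Kop M N phi" if "monic_modo N M K' \<and> (\<forall>i<M * N. annihilates N K' (phi i))" for K'
    using K_unique[OF assms] that by blast
  fix L assume H: "is_modo N L \<and> (\<forall>i<M * N. annihilates N L (phi i))"
  thus "\<exists>Q. is_modo N Q \<and> L = modo_comp N Q (Kop M N phi)"
    using division[OF assms, of "modo_bound N L"] is_modo_vanish by blast
qed

end
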